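(* For $\mathbf{x}=(x_1,\dots,x_N)^{\mathrm T}\in\mathbb{R}^N$ define $$\ell_{\mathrm{bin,exp}}(\mathbf{x})=N\sum_{n=1}^N e^{-2x_n^2}-\Big(\sum_{n=1}^N e^{-x_n^2}\Big)^2.$$ Then $\ell_{\mathrm{bin,exp}}(\mathbf{x})\ge0$ for all $\mathbf{x}$, and $\ell_{\mathrm{bin,exp}}(\mathbf{x})=0$ if and only if $\mathbf{x}\in\{-\alpha,\alpha\}^N$ for some $\alpha\in\mathbb{R}$. *)

theory Defs
  imports "HOL-Analysis.Analysis"
begin

definition l_bin_exp :: "real ^ 'n \<Rightarrow> real" where
  "l_bin_exp x = real CARD('n) * (\<Sum>n\<in>UNIV. exp (- 2 * (x $ n)^2))
                 - (\<Sum>n\<in>UNIV. exp (- ((x $ n)^2)))^2"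

end

theory Submission
  imports Defs
begin

lemma ident:
  fixes a :: "'n::finite \<Rightarrow> real"
  shows "2 * (real CARD('n) * (\<Sum>n\<in>UNIV. (a n)^2) - (\<Sum>n\<in>UNIV. a n)^2)
         = (\<Sum>i\<in>UNIV. \<Sum>j\<in>UNIV. (a i - a j)^2)"
proof -
  have "(\<Sum>i\<in>UNIV. \<Sum>j\<in>UNIV. (a i - a j)^2)
      = (\<Sum>i\<in>UNIV. \<Sum>j\<in>UNIV. (a i)^2 + (a j)^2 - 2 * (a i * a j))"
    by (simp add: power2_diff algebra_simps)
  also have "\<dots> = (\<Sum>i\<in>UNIV. real CARD('n) * (a i)^2 + (\<Sum>j\<in>UNIV. (a j)^2) - 2 * (a i * (\<Sum>j\<in>UNIV. a j)))"
    by (simp add: sum.distrib sum_subtractf sum_distrib_left sum_distrib_right)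
  also have "\<dots> = 2 * (real CARD('n) * (\<Sum>n\<in>UNIV. (a n)^2) - (\<Sum>n\<in>UNIV. a n)^2)"
    by (simp add: sum.distrib sum_subtractf sum_distrib_left sum_distrib_right power2_eq_square algebra_simps)
  finally show ?thesis by simp
qed

theorem mainTheorem11:
  fixes x :: "real ^ 'n"
  shows "l_bin_exp x \<ge> 0 \<and>
         (l_bin_exp x = 0 \<longleftrightarrow> (\<exists>\<alpha>::real. \<forall>n. x $ n \<in> {-\<alpha>, \<alpha>}))"
proof -
  define a where "a = (\<lambda>n. exp (- ((x $ n)^2)))"
  have e: "exp (- 2 * (x $ n)^2) = (a n)^2" for n
    proof -
    have "exp (- 2 * (x $ n)^2) = exp (- ((x $ n)^2) + - ((x $ n)^2))" by simp
    also have "\<dots> = (exp (- ((x $ n)^2)))^2" by (simp only: exp_add power2_eq_square)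
    finally show ?thesis unfolding a_def .
  qed
  have L: "2 * l_bin_exp x = (\<Sum>i\<in>UNIV. \<Sum>j\<in>UNIV. (a i - a j)^2)"
    unfolding l_bin_exp_def e using ident[of a] unfolding a_def by simp
  have nn: "(\<Sum>i\<in>UNIV. \<Sum>j\<in>UNIV. (a i - a j)^2) \<ge> 0"
    by (intro sum_nonneg) auto
  have z: "l_bin_exp x = 0 \<longleftrightarrow> (\<forall>i j. a i = a j)"
  proof -
    have "l_bin_exp x = 0 \<longleftrightarrow> (\<Sum>i\<in>UNIV. \<Sum>j\<in>UNIV. (a i - a j)^2) = 0" using L by linarith
    also have "\<dots> \<longleftrightarrow> (\<forall>i. (\<Sum>j\<in>UNIV. (a i - a j)^2) = 0)"
      by (subst sum_nonneg_eq_0_iff) (auto intro: sum_nonneg)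
    also have "\<dots> \<longleftrightarrow> (\<forall>i j. a i = a j)"
      by (subst sum_nonneg_eq_0_iff) auto
    finally show ?thesis .
  qed
  have aeq: "a i = a j \<longleftrightarrow> (x $ i)^2 = (x $ j)^2" for i j
    unfolding a_def by simp
  have eqv: "(\<forall>i j. a i = a j) \<longleftrightarrow> (\<exists>\<alpha>::real. \<forall>n. x $ n \<in> {-\<alpha>, \<alpha>})"
  proof
    assume h: "\<forall>i j. a i = a j"
    fix k :: 'n
    have "\<forall>n. x $ n \<in> {- \<bar>x $ k\<bar>, \<bar>x $ k\<bar>}"
    proof
      fix n
      have "(x $ n)^2 = (x $ k)^2" using h aeq by blast
      hence "\<bar>x $ n\<bar> = \<bar>x $ k\<bar>" by (metis real_sqrt_abs)
      thus "x $ n \<in> {- \<bar>x $ k\<bar>, \<bar>x $ k\<bar>}" by (auto simp: abs_if split: if_splits)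
    qed
    thus "\<exists>\<alpha>::real. \<forall>n. x $ n \<in> {-\<alpha>, \<alpha>}" by blast
  next
    assume "\<exists>\<alpha>::real. \<forall>n. x $ n \<in> {-\<alpha>, \<alpha>}"
    then obtain \<alpha> where "\<forall>n. x $ n \<in> {-\<alpha>, \<alpha>}" by blast
    hence "\<forall>n. (x $ n)^2 = \<alpha>^2" by (metis insert_iff singletonD power2_minus)
    thus "\<forall>i j. a i = a j" using aeq by simp
  qed
  have "l_bin_exp x \<ge> 0" using L nn by linarith
  thus ?thesis using z eqv by blast
qed

end
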